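(* Let $\{(\mathbf{x}^n,\mathbf{Z}^n,\Gamma^n)\}$ be generated by the SPULTRA iteration defined in the context (with exact image update) from some initialization with $\mathbf{x}^0\in\mathcal{X}$. Suppose a subsequence $\{(\mathbf{x}^{q_m},\mathbf{Z}^{q_m-1},\Gamma^{q_m-1})\}_m$ converges to $(\mathbf{x}^*,\mathbf{Z}^{**},\Gamma^{**})$. Then $\{\mathbf{x}^{q_m-1}\}_m$ also converges to $\mathbf{x}^*$, and $\mathbf{x}^*$ is the unique minimizer over $\mathbf{x}$ of $F(\mathbf{x},\mathbf{Z}^{**},\Gamma^{**};\mathbf{x}^* )$.
   Context: Data and model. $\mathbf{A}\in\mathbb{R}^{N_d\times N_p}$ is a matrix with nonnegative entries; write $l_i(\mathbf{x})=[\mathbf{A}\mathbf{x}]_i$. Constants: $I_0>0$, $\sigma^2\ge 0$, measurements $Y_i\in\mathbb{R}$, coefficients $s_{1_i},s_{2_i}\in\mathbb{R}$, $x_{\max}>0$. Let $f_i(l)=s_{1_i}l+s_{2_i}l^2$ and $$h_i(l)=\big(I_0e^{-f_i(l)}+\sigma^2\big)-Y_i\log\big(I_0e^{-f_i(l)}+\sigma^2\big),\qquad \mathsf{L}(\mathbf{x})=\sum_{i=1}^{N_d}h_i(l_i(\mathbf{x})).$$ Let $\mathcal{X}=\{\mathbf{x}\in\mathbb{R}^{N_p}:0\le x_j\le x_{\max}\ \forall j\}$ and $\mathfrak{X}(\mathbf{x})=0$ if $\mathbf{x}\in\mathcal{X}$, $+\infty$ otherwise. Regularizer. For $j=1,\dots,\tilde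 N$, $\mathbf{P}_j\in\mathbb{R}^{v\times N_p}$ extracts the $j$-th patch of $v$ voxels (a row-selection matrix); assume every voxel belongs to at least one patch. $\boldsymbol{\Omega}_1,\dots,\boldsymbol{\Omega}_K\in\mathbb{R}^{v\times v}$ are fixed nonsingular (pre-learned) transforms. Weights $\tau_j>0$, and $\beta>0$, $\gamma_c>0$. Variables: sparse code matrix $\mathbf{Z}=[\mathbf{z}_1,\dots,\mathbf{z}_{\tilde N}]$ with $\mathbf{z}_j\in\mathbb{R}^v$, and class vector $\Gamma\in\{1,\dots,K\}^{\tilde N}$. Define $$\mathsf{R}(\mathbf{x},\mathbf{Z},\Gamma)=\beta\sum_{j=1}^{\tilde N}\tau_j\Big(\|\boldsymbol{\Omega}_{\Gamma_j}\mathbf{P}_j\mathbf{x}-\mathbf{z}_j\|_2^2+\gamma_c^2\|\mathbf{z}_j\|_0\Big),$$ where $\|\cdot\|_0$ counts nonzero entries. The objective is $G(\mathbf{x},\mathbf{Z},\Gamma)=\mathsf{L}(\mathbf{x})+\mathsf{R}(\mathbf{x},\mathbf{Z},\Gamma)+\mathfrak{X}(\mathbf{x})$. Surrogates. Curvature functions $c_i:[0,\infty)\to(0,\infty)$ are continuous and chosen so that, with $$q_i(l;\bar l)=h_i(\bar l)+\dot h_i(\bar l)(l-\bar l)+\tfrac12 c_i(\bar l)(l-\bar l)^2,$$ one has $h_i(l)\le q_i(l;\bar l)$ for all $l\ge0$, $\bar l\ge 0$ (as achieved by the optimum-curvature rule $c_i(\bar l)=2\,[h_i(0)-h_i(\bar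 l)+\bar l\,\dot h_i(\bar l)]/\bar l^2$ for $\bar l>0$, $c_i(0)=\ddot h_i(0)$, with nonpositive values replaced by a small positive constant). For $\bar{\mathbf{x}}\in\mathcal{X}$ define the majorizer $$F(\mathbf{x},\mathbf{Z},\Gamma;\bar{\mathbf{x}})=\sum_{i=1}^{N_d}q_i\big(l_i(\mathbf{x});l_i(\bar{\mathbf{x}})\big)+\mathsf{R}(\mathbf{x},\mathbf{Z},\Gamma)+\mathfrak{X}(\mathbf{x}).$$ SPULTRA iteration (exact version). Given $(\mathbf{x}^n,\mathbf{Z}^n,\Gamma^n)$: image update $\mathbf{x}^{n+1}\in\arg\min_{\mathbf{x}}F(\mathbf{x},\mathbf{Z}^n,\Gamma^n;\mathbf{x}^n)$; then sparse coding and clustering $(\mathbf{Z}^{n+1},\Gamma^{n+1})\in\arg\min_{\mathbf{Z},\Gamma}\mathsf{R}(\mathbf{x}^{n+1},\mathbf{Z},\Gamma)$ (computed exactly: for each $j$, $\Gamma_j^{n+1}$ minimizes over $k$ the value $\|\boldsymbol{\Omega}_k\mathbf{P}_j\mathbf{x}^{n+1}-H_{\gamma_c}(\boldsymbol{\Omega}_k\mathbf{P}_j\mathbf{x}^{n+1})\|_2^2+\gamma_c^2\|H_{\gamma_c}(\boldsymbol{\Omega}_k\mathbf{P}_j\mathbf{x}^{n+1})\|_0$ and $\mathbf{z}_j^{n+1}=H_{\gamma_c}(\boldsymbol{\Omega}_{\Gamma_j^{n+1}}\mathbf{P}_j\mathbf{x}^{n+1})$, where $H_{\gamma_c}$ zeroes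 entries of magnitude less than $\gamma_c$ and keeps the others). *)

theory Defs
  imports "HOL-Analysis.Analysis"
begin

text \<open>SPULTRA setting. Index types: 'p voxels (N_p), 'd detector bins (N_d),
  'v voxels per patch (v), 'j patches (tilde N), 'k classes (K).\<close>

definition Xset :: "real \<Rightarrow> (real^'p) set" where
  "Xset xmax = {x. \<forall>c. 0 \<le> x $ c \<and> x $ c \<le> xmax}"

definition lproj :: "real^'p^'d \<Rightarrow> real^'p \<Rightarrow> 'd \<Rightarrow> real" where
  "lproj A x i = (A *v x) $ i"

definition hfun :: "real \<Rightarrow> real \<Rightarrow> real \<Rightarrow> real \<Rightarrow> real \<Rightarrow> real \<Rightarrow> real" where
  "hfun I0 sig2 Y s1 s2 l =
     (I0 * exp (- (s1 * l + s2 * l^2)) + sig2) - Y * ln (I0 * exp (- (s1 * l + s2 * l^2)) + sig2)"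

definition Lfun :: "real \<Rightarrow> real \<Rightarrow> ('d::finite \<Rightarrow> real) \<Rightarrow> ('d \<Rightarrow> real) \<Rightarrow> ('d \<Rightarrow> real)
    \<Rightarrow> real^'p^'d \<Rightarrow> real^'p \<Rightarrow> real" where
  "Lfun I0 sig2 Y s1 s2 A x = (\<Sum>i\<in>UNIV. hfun I0 sig2 (Y i) (s1 i) (s2 i) (lproj A x i))"

definition qsurr :: "real \<Rightarrow> real \<Rightarrow> real \<Rightarrow> real \<Rightarrow> real \<Rightarrow> (real \<Rightarrow> real)
    \<Rightarrow> real \<Rightarrow> real \<Rightarrow> real" where
  "qsurr I0 sig2 Y s1 s2 cc l lb =
     hfun I0 sig2 Y s1 s2 lb + deriv (hfun I0 sig2 Y s1 s2) lb * (l - lb)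
       + 1/2 * cc lb * (l - lb)^2"

definition l0 :: "real^'v \<Rightarrow> nat" where
  "l0 z = card {r. z $ r \<noteq> 0}"

definition Rfun :: "real \<Rightarrow> ('j::finite \<Rightarrow> real) \<Rightarrow> ('k \<Rightarrow> real^'v^'v) \<Rightarrow> ('j \<Rightarrow> real^'p^'v)
    \<Rightarrow> real \<Rightarrow> real^'p \<Rightarrow> ('j \<Rightarrow> real^'v) \<Rightarrow> ('j \<Rightarrow> 'k) \<Rightarrow> real" where
  "Rfun beta tau Om P gc x Z Gam =
     beta * (\<Sum>j\<in>UNIV. tau j * ((norm (Om (Gam j) *v (P j *v x) - Z j))^2 + gc^2 * real (l0 (Z j))))"

text \<open>Majorizer F on the box Xset (the indicator term is rendered by restricting to Xset)\<close>
definition Fmaj :: "real \<Rightarrow> real \<Rightarrow> ('d::finite \<Rightarrow> real) \<Rightarrow> ('d \<Rightarrow> real) \<Rightarrow> ('d \<Rightarrow> real)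
    \<Rightarrow> ('d \<Rightarrow> real \<Rightarrow> real) \<Rightarrow> real^'p^'d
    \<Rightarrow> real \<Rightarrow> ('j::finite \<Rightarrow> real) \<Rightarrow> ('k \<Rightarrow> real^'v^'v) \<Rightarrow> ('j \<Rightarrow> real^'p^'v) \<Rightarrow> real
    \<Rightarrow> real^'p \<Rightarrow> ('j \<Rightarrow> real^'v) \<Rightarrow> ('j \<Rightarrow> 'k) \<Rightarrow> real^'p \<Rightarrow> real" where
  "Fmaj I0 sig2 Y s1 s2 c A beta tau Om P gc x Z Gam xb =
     (\<Sum>i\<in>UNIV. qsurr I0 sig2 (Y i) (s1 i) (s2 i) (c i) (lproj A x i) (lproj A xb i))
     + Rfun beta tau Om P gc x Z Gam"

end

theory Submission
  imports Defs
begin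

lemma Xset_cbox: "Xset xmax = cbox 0 (vec xmax)"
  by (auto simp: Xset_def mem_box_cart)

lemma Xset_comb:
  assumes "x \<in> Xset xmax" "y \<in> Xset xmax" "0 \<le> t" "t \<le> 1"
  shows "(1-t) *\<^sub>R x + t *\<^sub>R y \<in> Xset xmax"
proof -
  have "\<forall>col. 0 \<le> x$col \<and> x$col \<le> xmax" "\<forall>col. 0 \<le> y$col \<and> y$col \<le> xmax"
    using assms by (auto simp: Xset_def)
  then have "\<forall>col. 0 \<le> (1-t)*x$col + t*y$col \<and> (1-t)*x$col + t*y$col \<le> xmax"
  proof (intro allI conjI)
    fix col assume h: "\<forall>col. 0 \<le> x$col \<and> x$col \<le> xmax" "\<forall>col. 0 \<le> y$col \<and> y$col \<le> xmax"
    show "0 \<le> (1-t)*x$col + t*y$col" using h assms by simp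
    have "(1-t)*x$col \<le> (1-t)*xmax" using h assms by (intro mult_left_mono) auto
    moreover have "t*y$col \<le> t*xmax" using h assms by (intro mult_left_mono) auto
    ultimately show "(1-t)*x$col + t*y$col \<le> xmax" by (simp add: algebra_simps)
  qed
  then show ?thesis by (simp add: Xset_def)
qed

lemma lproj_comb: "lproj A ((1-t) *\<^sub>R x + t *\<^sub>R y) i = (1-t) * lproj A x i + t * lproj A y i"
  by (simp add: lproj_def matrix_vector_right_distrib matrix_vector_mult_scaleR)

lemma lproj_diff: "lproj A (y - x) i = lproj A y i - lproj A x i"
  by (simp add: lproj_def matrix_vector_mult_diff_distrib)

lemma lproj_nonneg:
  assumes "\<forall>i col. 0 \<le> A $ i $ col" "x \<in> Xset xmax"
  shows "0 \<le> lproj A x i"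
  using assms by (auto simp: lproj_def matrix_vector_mult_def Xset_def intro!: sum_nonneg)

lemma norm_comb:
  fixes a b :: "'a::real_inner"
  shows "(norm ((1-t) *\<^sub>R a + t *\<^sub>R b))^2 = (1-t)*(norm a)^2 + t*(norm b)^2 - t*(1-t)*(norm (b - a))^2"
  by (simp add: power2_norm_eq_inner inner_add_left inner_add_right inner_diff_left inner_diff_right
      inner_commute algebra_simps)

lemma sq_comb:
  fixes a b t :: real
  shows "((1-t)*a + t*b)^2 = (1-t)*a^2 + t*b^2 - t*(1-t)*(b - a)^2"
  by (simp add: power2_eq_square algebra_simps)

definition Cq where
  "Cq A c beta tau Om P xb Gam d =
    (\<Sum>i\<in>UNIV. 1/2 * c i (lproj A xb i) * (lproj A d i)^2)
    + beta * (\<Sum>j\<in>UNIV. tau j * (norm (Om (Gam j) *v (P j *v d)))^2)"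

lemma Fmaj_comb:
  "Fmaj I0 sig2 Y s1 s2 c A beta tau Om P gc ((1-t) *\<^sub>R x + t *\<^sub>R y) Z Gam xb =
   (1-t) * Fmaj I0 sig2 Y s1 s2 c A beta tau Om P gc x Z Gam xb
   + t * Fmaj I0 sig2 Y s1 s2 c A beta tau Om P gc y Z Gam xb
   - t*(1-t) * Cq A c beta tau Om P xb Gam (y - x)"
proof -
  define lb where "lb i = lproj A xb i" for i
  define H where "H i = hfun I0 sig2 (Y i) (s1 i) (s2 i) (lb i)" for i
  define D where "D i = deriv (hfun I0 sig2 (Y i) (s1 i) (s2 i)) (lb i)" for i
  have q: "qsurr I0 sig2 (Y i) (s1 i) (s2 i) (c i) (lproj A ((1-t) *\<^sub>R x + t *\<^sub>R y) i) (lproj A xb i)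
     = (1-t) * qsurr I0 sig2 (Y i) (s1 i) (s2 i) (c i) (lproj A x i) (lproj A xb i)
       + t * qsurr I0 sig2 (Y i) (s1 i) (s2 i) (c i) (lproj A y i) (lproj A xb i)
       - t*(1-t) * (1/2 * c i (lproj A xb i) * (lproj A (y - x) i)^2)" for i
  proof -
    have e: "(1-t) * lproj A x i + t * lproj A y i - lb i = (1-t)*(lproj A x i - lb i) + t*(lproj A y i - lb i)"
      by (simp add: algebra_simps)
    have s: "((1-t)*(lproj A x i - lb i) + t*(lproj A y i - lb i))^2 =
      (1-t)*(lproj A x i - lb i)^2 + t*(lproj A y i - lb i)^2 - t*(1-t)*(lproj A y i - lproj A x i)^2"
      using sq_comb[of t "lproj A x i - lb i" "lproj A y i - lb i"] by simp
    show ?thesis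
      unfolding qsurr_def lproj_comb lproj_diff lb_def[symmetric] H_def[symmetric] D_def[symmetric] e s
      by (simp add: field_simps)
  qed
  have r: "tau j * ((norm (Om (Gam j) *v (P j *v ((1-t) *\<^sub>R x + t *\<^sub>R y)) - Z j))^2 + gc^2 * real (l0 (Z j)))
     = (1-t) * (tau j * ((norm (Om (Gam j) *v (P j *v x) - Z j))^2 + gc^2 * real (l0 (Z j))))
       + t * (tau j * ((norm (Om (Gam j) *v (P j *v y) - Z j))^2 + gc^2 * real (l0 (Z j))))
       - t*(1-t) * (tau j * (norm (Om (Gam j) *v (P j *v (y - x))))^2)" for j
  proof -
    have e: "Om (Gam j) *v (P j *v ((1-t) *\<^sub>R x + t *\<^sub>R y)) - Z j =
       (1-t) *\<^sub>R (Om (Gam j) *v (P j *v x) - Z j) + t *\<^sub>R (Om (Gam j) *v (P j *v y) - Z j)"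
      by (simp add: matrix_vector_right_distrib matrix_vector_mult_scaleR algebra_simps)
    have d: "(Om (Gam j) *v (P j *v y) - Z j) - (Om (Gam j) *v (P j *v x) - Z j) = Om (Gam j) *v (P j *v (y - x))"
      by (simp add: matrix_vector_mult_diff_distrib)
    show ?thesis unfolding e norm_comb d by (simp add: algebra_simps)
  qed
  show ?thesis
    unfolding Fmaj_def Rfun_def Cq_def q r
    by (simp add: sum.distrib sum_subtractf sum_distrib_left algebra_simps)
qed


lemma quad_min:
  fixes f :: "'a::real_vector \<Rightarrow> real"
  assumes "\<forall>w\<in>S. f x \<le> f w"
    and "\<forall>t. 0 \<le> t \<and> t \<le> 1 \<longrightarrow> (1-t) *\<^sub>R x + t *\<^sub>R y \<in> S"
    and "\<forall>t. f ((1-t) *\<^sub>R x + t *\<^sub>R y) = (1-t) * f x + t * f y - t*(1-t)*C"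
  shows "f x + C \<le> f y"
proof (rule ccontr)
  assume neg: "\<not> (f x + C \<le> f y)"
  define e where "e = f x + C - f y"
  have e: "e > 0" using neg by (simp add: e_def)
  have key: "e \<le> t * C" if "0 < t" "t \<le> 1" for t
  proof -
    have "f x \<le> (1-t) * f x + t * f y - t*(1-t)*C"
      using assms that by (metis less_eq_real_def)
    then have "0 \<le> t * (f y - f x - (1-t)*C)" by (simp add: algebra_simps)
    then have "0 \<le> f y - f x - (1-t)*C" using that by (simp add: zero_le_mult_iff)
    then show ?thesis by (simp add: e_def algebra_simps)
  qed
  show False
  proof (cases "C \<le> 0")
    case True
    then show ?thesis using key[of 1] e by simp
  next
    case False
    define t where "t = min 1 (e/(2*C))"
    have t: "0 < t" "t \<le> 1" using e False by (auto simp: t_def)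
    have "t * C \<le> e/(2*C) * C" using False by (intro mult_right_mono) (auto simp: t_def)
    also have "\<dots> = e/2" using False by simp
    finally show ?thesis using key[OF t] e by simp
  qed
qed

lemma Cq_lower:
  fixes tau :: "'j::finite \<Rightarrow> real"
  assumes c_pos: "\<forall>i l. 0 \<le> l \<longrightarrow> c i l > 0"
    and A_nonneg: "\<forall>i col. 0 \<le> A $ i $ col" and xb: "xb \<in> Xset xmax"
    and beta: "beta > 0" and tau: "\<forall>j. tau j > 0"
    and Pj: "P j $ r = axis col 1"
    and B: "B > 0" "\<forall>k v. B * norm v \<le> norm (Om k *v v)"
  shows "beta * tau j * B^2 * (d $ col)^2 \<le> Cq A c beta tau Om P xb Gam d"
proof -
  have s1: "0 \<le> (\<Sum>i\<in>UNIV. 1/2 * c i (lproj A xb i) * (lproj A d i)^2)"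
  proof -
    have cp: "\<And>i. 0 < c i (lproj A xb i)" using c_pos lproj_nonneg[OF A_nonneg xb] by blast
    show ?thesis by (intro sum_nonneg mult_nonneg_nonneg) (auto simp: less_imp_le[OF cp])
  qed
  have comp: "(P j *v d) $ r = d $ col"
    using Pj by (simp add: matrix_vector_mul_component inner_axis')
  have "B * \<bar>d $ col\<bar> \<le> B * norm (P j *v d)"
    using B component_le_norm_cart[of "P j *v d" r] comp by (intro mult_left_mono) auto
  also have "\<dots> \<le> norm (Om (Gam j) *v (P j *v d))" using B by blast
  finally have "(B * \<bar>d $ col\<bar>)^2 \<le> (norm (Om (Gam j) *v (P j *v d)))^2"
    using B by (intro power_mono) auto
  then have n: "B^2 * (d $ col)^2 \<le> (norm (Om (Gam j) *v (P j *v d)))^2"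
    by (simp add: power_mult_distrib)
  have "tau j * (norm (Om (Gam j) *v (P j *v d)))^2 \<le> (\<Sum>j\<in>UNIV. tau j * (norm (Om (Gam j) *v (P j *v d)))^2)"
    using tau by (intro member_le_sum) (auto intro!: mult_nonneg_nonneg simp: less_imp_le)
  moreover have "tau j * (B^2 * (d $ col)^2) \<le> tau j * (norm (Om (Gam j) *v (P j *v d)))^2"
    using tau n by (intro mult_left_mono) (auto simp: less_imp_le)
  ultimately have "tau j * (B^2 * (d $ col)^2) \<le> (\<Sum>j\<in>UNIV. tau j * (norm (Om (Gam j) *v (P j *v d)))^2)"
    by linarith
  then have "beta * (tau j * (B^2 * (d $ col)^2)) \<le> beta * (\<Sum>j\<in>UNIV. tau j * (norm (Om (Gam j) *v (P j *v d)))^2)"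
    using beta by (intro mult_left_mono) auto
  then show ?thesis using s1 unfolding Cq_def by (simp add: algebra_simps)
qed

lemma Cq_nonneg:
  fixes tau :: "'j::finite \<Rightarrow> real"
  assumes c_pos: "\<forall>i l. 0 \<le> l \<longrightarrow> c i l > 0"
    and A_nonneg: "\<forall>i col. 0 \<le> A $ i $ col" and xb: "xb \<in> Xset xmax"
    and beta: "beta > 0" and tau: "\<forall>j. tau j > 0"
  shows "0 \<le> Cq A c beta tau Om P xb Gam d"
proof -
  have s1: "0 \<le> (\<Sum>i\<in>UNIV. 1/2 * c i (lproj A xb i) * (lproj A d i)^2)"
  proof -
    have cp: "\<And>i. 0 < c i (lproj A xb i)" using c_pos lproj_nonneg[OF A_nonneg xb] by blast
    show ?thesis by (intro sum_nonneg mult_nonneg_nonneg) (auto simp: less_imp_le[OF cp])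
  qed
  have "0 \<le> (\<Sum>j\<in>UNIV. tau j * (norm (Om (Gam j) *v (P j *v d)))^2)"
    using tau by (intro sum_nonneg) (auto intro!: mult_nonneg_nonneg simp: less_imp_le)
  then show ?thesis using s1 beta unfolding Cq_def by simp
qed

lemma Om_bound:
  fixes Om :: "'k::finite \<Rightarrow> real^'v^'v"
  assumes "\<forall>k. invertible (Om k)"
  obtains B where "B > 0" "\<forall>k v. B * norm v \<le> norm (Om k *v v)"
proof -
  have "\<exists>B. B > 0 \<and> (\<forall>v. B * norm v \<le> norm (Om k *v v))" for k
  proof -
    obtain A' where A': "A' ** Om k = mat 1" using assms invertible_def by blast
    have "inj ((*v) (Om k))"
    proof (rule injI)
      fix u v assume "Om k *v u = Om k *v v"
      then have "A' *v (Om k *v u) = A' *v (Om k *v v)" by simp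
      then show "u = v" by (simp add: matrix_vector_mul_assoc A')
    qed
    then obtain B where "B > 0" "\<And>x. B * norm x \<le> norm (Om k *v x)"
      using linear_inj_bounded_below_pos[of "(*v) (Om k)"] matrix_vector_mul_linear by blast
    then show ?thesis by blast
  qed
  then obtain Bf where Bf: "\<forall>k. Bf k > 0 \<and> (\<forall>v. Bf k * norm v \<le> norm (Om k *v v))" by metis
  define B where "B = Min (range Bf)"
  have "B > 0" using Bf by (simp add: B_def)
  moreover have "B * norm v \<le> norm (Om k *v v)" for k v
  proof -
    have "B \<le> Bf k" by (simp add: B_def)
    then have "B * norm v \<le> Bf k * norm v" by (intro mult_right_mono) auto
    then show ?thesis using Bf by (meson order_trans)
  qed
  ultimately show ?thesis using that by blast
qed


definition hder :: "real \<Rightarrow> real \<Rightarrow> real \<Rightarrow> real \<Rightarrow> real \<Rightarrow> real \<Rightarrow> real" where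
  "hder I0 sig2 Y s1 s2 l =
     I0 * (exp (- (s1 * l + s2 * l^2)) * (- (s1 + 2 * s2 * l)))
     - Y * (I0 * (exp (- (s1 * l + s2 * l^2)) * (- (s1 + 2 * s2 * l))) / (I0 * exp (- (s1 * l + s2 * l^2)) + sig2))"

lemma hfun_has_deriv:
  assumes "I0 > 0" "sig2 \<ge> 0"
  shows "(hfun I0 sig2 Y s1 s2 has_real_derivative hder I0 sig2 Y s1 s2 l) (at l)"
proof -
  have pos: "I0 * exp (- (s1 * l + s2 * l^2)) + sig2 > 0" using assms by (simp add: add_pos_nonneg)
  have g: "((\<lambda>l. - (s1 * l + s2 * l^2)) has_real_derivative (- (s1 + 2 * s2 * l))) (at l)"
    by (auto intro!: derivative_eq_intros simp: power2_eq_square)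
  have e: "((\<lambda>l. exp (- (s1 * l + s2 * l^2))) has_real_derivative exp (- (s1 * l + s2 * l^2)) * (- (s1 + 2 * s2 * l))) (at l)"
    using DERIV_chain2[OF DERIV_exp g] by simp
  have u: "((\<lambda>l. I0 * exp (- (s1 * l + s2 * l^2)) + sig2) has_real_derivative I0 * (exp (- (s1 * l + s2 * l^2)) * (- (s1 + 2 * s2 * l)))) (at l)"
    using DERIV_add[OF DERIV_cmult[OF e, of I0] DERIV_const[of sig2]] by simp
  have lu: "((\<lambda>l. ln (I0 * exp (- (s1 * l + s2 * l^2)) + sig2)) has_real_derivative
      I0 * (exp (- (s1 * l + s2 * l^2)) * (- (s1 + 2 * s2 * l))) / (I0 * exp (- (s1 * l + s2 * l^2)) + sig2)) (at l)"
    using DERIV_chain2[OF DERIV_ln u] pos by (simp add: divide_inverse mult.commute)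
  show ?thesis
    unfolding hfun_def[abs_def] hder_def
    using DERIV_diff[OF u DERIV_cmult[OF lu, of Y]] by simp
qed

lemma deriv_hfun:
  assumes "I0 > 0" "sig2 \<ge> 0"
  shows "deriv (hfun I0 sig2 Y s1 s2) l = hder I0 sig2 Y s1 s2 l"
  using hfun_has_deriv[OF assms] by (rule DERIV_imp_deriv)

lemma hfun_isCont:
  assumes "I0 > 0" "sig2 \<ge> 0"
  shows "isCont (hfun I0 sig2 Y s1 s2) l"
  using hfun_has_deriv[OF assms] by (rule DERIV_isCont)

lemma hder_isCont:
  assumes "I0 > 0" "sig2 \<ge> 0"
  shows "isCont (hder I0 sig2 Y s1 s2) l"
proof -
  have "0 < I0 * exp (- (s1 * l + s2 * l^2))" using assms by simp
  then have pos: "I0 * exp (- (s1 * l + s2 * l^2)) + sig2 \<noteq> 0" using assms by linarith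
  show ?thesis unfolding hder_def[abs_def] using pos by (intro continuous_intros) auto
qed


lemma Fmaj_split:
  "Fmaj I0 sig2 Y s1 s2 c A beta tau Om P gc y Z Gam xb =
    ((\<Sum>i\<in>UNIV. qsurr I0 sig2 (Y i) (s1 i) (s2 i) (c i) (lproj A y i) (lproj A xb i))
     + beta * (\<Sum>j\<in>UNIV. tau j * (norm (Om (Gam j) *v (P j *v y) - Z j))^2))
    + beta * (\<Sum>j\<in>UNIV. tau j * (gc^2 * real (l0 (Z j))))"
  unfolding Fmaj_def Rfun_def by (simp add: sum.distrib distrib_left algebra_simps)

lemma lproj_tendsto:
  assumes "a \<longlonglongrightarrow> a0"
  shows "(\<lambda>m. lproj A (a m) i) \<longlonglongrightarrow> lproj A a0 i"
  unfolding lproj_def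
  by (intro tendsto_vec_nth bounded_linear.tendsto[OF matrix_vector_mul_bounded_linear] assms)

lemma Fpart_tendsto:
  fixes tau :: "'j::finite \<Rightarrow> real" and A :: "real^'p^'d"
  assumes I0: "I0 > 0" and sig2: "sig2 \<ge> 0"
    and c_cont: "\<forall>i. continuous_on {0..} (c i)"
    and A_nonneg: "\<forall>i col. 0 \<le> A $ i $ col"
    and a: "a \<longlonglongrightarrow> a0" and b: "b \<longlonglongrightarrow> b0" and Zc: "\<forall>j. (\<lambda>m. Zm m j) \<longlonglongrightarrow> Zs j"
    and bX: "\<forall>m. b m \<in> Xset xmax" and b0X: "b0 \<in> Xset xmax"
  shows "(\<lambda>m. (\<Sum>i\<in>UNIV. qsurr I0 sig2 (Y i) (s1 i) (s2 i) (c i) (lproj A (a m) i) (lproj A (b m) i))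
     + beta * (\<Sum>j\<in>UNIV. tau j * (norm (Om (G j) *v (P j *v a m) - Zm m j))^2))
     \<longlonglongrightarrow> (\<Sum>i\<in>UNIV. qsurr I0 sig2 (Y i) (s1 i) (s2 i) (c i) (lproj A a0 i) (lproj A b0 i))
     + beta * (\<Sum>j\<in>UNIV. tau j * (norm (Om (G j) *v (P j *v a0) - Zs j))^2)"
proof -
  have q: "(\<lambda>m. qsurr I0 sig2 (Y i) (s1 i) (s2 i) (c i) (lproj A (a m) i) (lproj A (b m) i))
      \<longlonglongrightarrow> qsurr I0 sig2 (Y i) (s1 i) (s2 i) (c i) (lproj A a0 i) (lproj A b0 i)" for i
  proof -
    have la: "(\<lambda>m. lproj A (a m) i) \<longlonglongrightarrow> lproj A a0 i" by (rule lproj_tendsto[OF a])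
    have lb: "(\<lambda>m. lproj A (b m) i) \<longlonglongrightarrow> lproj A b0 i" by (rule lproj_tendsto[OF b])
    have h: "(\<lambda>m. hfun I0 sig2 (Y i) (s1 i) (s2 i) (lproj A (b m) i)) \<longlonglongrightarrow> hfun I0 sig2 (Y i) (s1 i) (s2 i) (lproj A b0 i)"
      by (rule isCont_tendsto_compose[OF hfun_isCont[OF I0 sig2] lb])
    have hd: "(\<lambda>m. hder I0 sig2 (Y i) (s1 i) (s2 i) (lproj A (b m) i)) \<longlonglongrightarrow> hder I0 sig2 (Y i) (s1 i) (s2 i) (lproj A b0 i)"
      by (rule isCont_tendsto_compose[OF hder_isCont[OF I0 sig2] lb])
    have cc: "(\<lambda>m. c i (lproj A (b m) i)) \<longlonglongrightarrow> c i (lproj A b0 i)"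
      apply (rule continuous_on_tendsto_compose[OF c_cont[rule_format] lb])
      using lproj_nonneg[OF A_nonneg b0X] lproj_nonneg[OF A_nonneg bX[rule_format]] by auto
    show ?thesis
      unfolding qsurr_def deriv_hfun[OF I0 sig2]
      by (intro tendsto_intros h hd cc la lb)
  qed
  have r: "(\<lambda>m. tau j * (norm (Om (G j) *v (P j *v a m) - Zm m j))^2) \<longlonglongrightarrow> tau j * (norm (Om (G j) *v (P j *v a0) - Zs j))^2" for j
  proof -
    have "(\<lambda>m. Om (G j) *v (P j *v a m)) \<longlonglongrightarrow> Om (G j) *v (P j *v a0)"
      by (intro bounded_linear.tendsto[OF matrix_vector_mul_bounded_linear] a)
    then show ?thesis using Zc by (intro tendsto_intros) auto
  qed
  show ?thesis by (intro tendsto_intros q r)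
qed

theorem lemma1:
  fixes A :: "real^'p^'d"
    and I0 sig2 xmax beta gc :: real
    and Y s1 s2 :: "'d \<Rightarrow> real"
    and c :: "'d \<Rightarrow> real \<Rightarrow> real"
    and P :: "'j::finite \<Rightarrow> real^'p^'v"
    and Om :: "'k::finite \<Rightarrow> real^'v^'v"
    and tau :: "'j \<Rightarrow> real"
    and x :: "nat \<Rightarrow> real^'p"
    and Z :: "nat \<Rightarrow> 'j \<Rightarrow> real^'v"
    and Gam :: "nat \<Rightarrow> 'j \<Rightarrow> 'k"
    and q :: "nat \<Rightarrow> nat"
    and xs :: "real^'p"
    and Zss :: "'j \<Rightarrow> real^'v"
    and Gss :: "'j \<Rightarrow> 'k"
  assumes A_nonneg: "\<forall>i col. 0 \<le> A $ i $ col"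
    and I0_pos: "I0 > 0" and sig2_nonneg: "sig2 \<ge> 0" and xmax_pos: "xmax > 0"
    and beta_pos: "beta > 0" and gc_pos: "gc > 0" and tau_pos: "\<forall>j. tau j > 0"
    and P_rowsel: "\<forall>j r. \<exists>col. P j $ r = axis col 1"
    and P_cover: "\<forall>col. \<exists>j r. P j $ r = axis col 1"
    and Om_inv: "\<forall>k. invertible (Om k)"
    and c_cont: "\<forall>i. continuous_on {0..} (c i)"
    and c_pos: "\<forall>i l. 0 \<le> l \<longrightarrow> c i l > 0"
    and c_major: "\<forall>i l lb. 0 \<le> l \<longrightarrow> 0 \<le> lb \<longrightarrow>
        hfun I0 sig2 (Y i) (s1 i) (s2 i) l \<le> qsurr I0 sig2 (Y i) (s1 i) (s2 i) (c i) l lb"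
    and x0: "x 0 \<in> Xset xmax"
    and img_update: "\<forall>n. x (Suc n) \<in> Xset xmax \<and>
        (\<forall>y\<in>Xset xmax. Fmaj I0 sig2 Y s1 s2 c A beta tau Om P gc (x (Suc n)) (Z n) (Gam n) (x n)
                      \<le> Fmaj I0 sig2 Y s1 s2 c A beta tau Om P gc y (Z n) (Gam n) (x n))"
    and sc_update: "\<forall>n Z' Gam'. Rfun beta tau Om P gc (x (Suc n)) (Z (Suc n)) (Gam (Suc n))
                      \<le> Rfun beta tau Om P gc (x (Suc n)) Z' Gam'"
    and q_mono: "strict_mono q"
    and conv_x: "(\<lambda>m. x (q m)) \<longlonglongrightarrow> xs"
    and conv_Z: "\<forall>j. (\<lambda>m. Z (q m - 1) j) \<longlonglongrightarrow> Zss j"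
    and conv_Gam: "\<forall>j. eventually (\<lambda>m. Gam (q m - 1) j = Gss j) sequentially"
  shows "(\<lambda>m. x (q m - 1)) \<longlonglongrightarrow> xs \<and>
         {y \<in> Xset xmax. \<forall>w\<in>Xset xmax.
            Fmaj I0 sig2 Y s1 s2 c A beta tau Om P gc y Zss Gss xs
            \<le> Fmaj I0 sig2 Y s1 s2 c A beta tau Om P gc w Zss Gss xs} = {xs}"
proof -
  define F where "F = Fmaj I0 sig2 Y s1 s2 c A beta tau Om P gc"
  define R where "R = Rfun beta tau Om P gc"
  define L where "L = Lfun I0 sig2 Y s1 s2 A"
  define CC where "CC = Cq A c beta tau Om P"
  define X :: "(real^'p) set" where "X = Xset xmax"
  have xin: "x n \<in> X" for n
    using x0 img_update unfolding X_def by (cases n) auto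
  have Fself: "F y Z' G' y = L y + R y Z' G'" for y Z' G'
    unfolding F_def L_def R_def Fmaj_def Lfun_def qsurr_def by simp
  have Fge: "L y + R y Z' G' \<le> F y Z' G' xb" if "y \<in> X" "xb \<in> X" for y xb Z' G'
  proof -
    have "hfun I0 sig2 (Y i) (s1 i) (s2 i) (lproj A y i) \<le>
        qsurr I0 sig2 (Y i) (s1 i) (s2 i) (c i) (lproj A y i) (lproj A xb i)" for i
      using c_major lproj_nonneg[OF A_nonneg, of y xmax] lproj_nonneg[OF A_nonneg, of xb xmax] that
      unfolding X_def by blast
    then have "L y \<le> (\<Sum>i\<in>UNIV. qsurr I0 sig2 (Y i) (s1 i) (s2 i) (c i) (lproj A y i) (lproj A xb i))"
      unfolding L_def Lfun_def by (intro sum_mono) auto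
    then show ?thesis unfolding F_def Fmaj_def R_def by simp
  qed
  have convX: "(1-t) *\<^sub>R u + t *\<^sub>R v \<in> X" if "u \<in> X" "v \<in> X" "0 \<le> t" "t \<le> 1" for u v t
    using Xset_comb that unfolding X_def by blast
  have minstep: "F a Z' G' xb + CC xb G' (b - a) \<le> F b Z' G' xb"
    if "b \<in> X" "\<forall>w\<in>X. F a Z' G' xb \<le> F w Z' G' xb" "a \<in> X" for a b xb Z' G'
  proof -
    have c1: "\<forall>t. 0 \<le> t \<and> t \<le> 1 \<longrightarrow> (1-t) *\<^sub>R a + t *\<^sub>R b \<in> X"
      using convX that by blast
    have c2: "\<forall>t. F ((1-t) *\<^sub>R a + t *\<^sub>R b) Z' G' xb = (1-t) * F a Z' G' xb + t * F b Z' G' xb - t*(1-t)*CC xb G' (b - a)"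
      unfolding F_def CC_def using Fmaj_comb by blast
    show ?thesis using quad_min[of X "\<lambda>y. F y Z' G' xb" a b "CC xb G' (b - a)", OF that(2) c1 c2] .
  qed
  define G where "G n = L (x n) + R (x n) (Z n) (Gam n)" for n
  define dd where "dd n = x n - x (Suc n)" for n
  have desc: "G (Suc n) + CC (x n) (Gam n) (dd n) \<le> G n" for n
  proof -
    have m: "\<forall>w\<in>X. F (x (Suc n)) (Z n) (Gam n) (x n) \<le> F w (Z n) (Gam n) (x n)"
      using img_update unfolding F_def X_def by blast
    have "F (x (Suc n)) (Z n) (Gam n) (x n) + CC (x n) (Gam n) (dd n) \<le> F (x n) (Z n) (Gam n) (x n)"
      using minstep[OF xin m xin] unfolding dd_def by simp
    moreover have "R (x (Suc n)) (Z (Suc n)) (Gam (Suc n)) \<le> R (x (Suc n)) (Z n) (Gam n)"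
      using sc_update unfolding R_def by blast
    moreover have "L (x (Suc n)) + R (x (Suc n)) (Z n) (Gam n) \<le> F (x (Suc n)) (Z n) (Gam n) (x n)"
      by (rule Fge[OF xin xin])
    ultimately show ?thesis unfolding G_def Fself by linarith
  qed
  have CCnn: "0 \<le> CC xb G' d" if "xb \<in> X" for xb G' d
    using Cq_nonneg[OF c_pos A_nonneg _ beta_pos tau_pos] that unfolding CC_def X_def by blast
  have Rnn: "0 \<le> R y Z' G'" for y Z' G'
  proof -
    have "0 \<le> (\<Sum>j\<in>UNIV. tau j * ((norm (Om (G' j) *v (P j *v y) - Z' j))^2 + gc^2 * real (l0 (Z' j))))"
      using tau_pos by (intro sum_nonneg) (auto intro!: mult_nonneg_nonneg simp: less_imp_le)
    then show ?thesis unfolding R_def Rfun_def using beta_pos by simp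
  qed
  have contL: "continuous_on X L"
  proof -
    have "continuous_on UNIV (\<lambda>y. hfun I0 sig2 (Y i) (s1 i) (s2 i) (lproj A y i))" for i
    proof -
      have h0: "continuous_on UNIV (\<lambda>y::real^'p. (A *v y) $ i)" by (intro continuous_intros)
      have h1: "continuous_on UNIV (hfun I0 sig2 (Y i) (s1 i) (s2 i))"
        using hfun_isCont[OF I0_pos sig2_nonneg] by (simp add: continuous_at_imp_continuous_on)
      show ?thesis unfolding lproj_def using continuous_on_compose2[OF h1 h0 subset_UNIV] .
    qed
    then show ?thesis unfolding L_def Lfun_def[abs_def]
      by (intro continuous_on_sum) (auto intro: continuous_on_subset)
  qed
  have compX: "compact X" unfolding X_def Xset_cbox by simp
  obtain xm where xm: "xm \<in> X" "\<forall>y\<in>X. L xm \<le> L y"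
    using continuous_attains_inf[OF compX _ contL] xin[of 0] by blast
  have Gbd: "\<forall>n. L xm \<le> G n" using xm xin Rnn unfolding G_def by (metis add_increasing2)
  have Gdec: "decseq G"
  proof (rule decseq_SucI)
    fix n show "G (Suc n) \<le> G n" using desc[of n] CCnn[OF xin, of n "Gam n" "dd n"] by linarith
  qed
  obtain Gl where Gl: "G \<longlonglongrightarrow> Gl" using decseq_convergent[OF Gdec Gbd] by blast
  have "(\<lambda>n. G n - G (Suc n)) \<longlonglongrightarrow> Gl - Gl"
    by (intro tendsto_intros Gl LIMSEQ_Suc[OF Gl])
  then have Gdiff: "(\<lambda>n. G n - G (Suc n)) \<longlonglongrightarrow> 0" by simp
  have CCt: "(\<lambda>n. CC (x n) (Gam n) (dd n)) \<longlonglongrightarrow> 0"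
  proof (rule tendsto_sandwich[OF _ _ tendsto_const Gdiff])
    show "\<forall>\<^sub>F n in sequentially. 0 \<le> CC (x n) (Gam n) (dd n)" using CCnn[OF xin] by simp
    show "\<forall>\<^sub>F n in sequentially. CC (x n) (Gam n) (dd n) \<le> G n - G (Suc n)" using desc by (simp add: algebra_simps)
  qed
  obtain B where B: "B > 0" "\<forall>k v. B * norm v \<le> norm (Om k *v v)" using Om_bound[OF Om_inv] by blast
  have coordlow: "\<exists>\<kappa>>0. \<forall>xb\<in>X. \<forall>G' d. \<kappa> * (d $ col)^2 \<le> CC xb G' d" for col
  proof -
    obtain j r where jr: "P j $ r = axis col 1" using P_cover by blast
    have "beta * tau j * B^2 > 0" using beta_pos tau_pos B by simp
    moreover have "\<forall>xb\<in>X. \<forall>G' d. beta * tau j * B^2 * (d $ col)^2 \<le> CC xb G' d"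
      using Cq_lower[where P=P and j=j and r=r and col=col and B=B and Om=Om and xmax=xmax, OF c_pos A_nonneg _ beta_pos tau_pos jr B(1) B(2)] unfolding CC_def X_def by blast
    ultimately show ?thesis by blast
  qed
  have ddt: "dd \<longlonglongrightarrow> 0"
  proof (rule vec_tendstoI)
    fix col
    obtain \<kappa> where k: "\<kappa> > 0" "\<forall>xb\<in>X. \<forall>G' d. \<kappa> * (d $ col)^2 \<le> CC xb G' d" using coordlow by blast
    have "(\<lambda>n. CC (x n) (Gam n) (dd n) / \<kappa>) \<longlonglongrightarrow> 0 / \<kappa>" using k(1) by (intro tendsto_intros CCt) simp
    then have t1: "(\<lambda>n. CC (x n) (Gam n) (dd n) / \<kappa>) \<longlonglongrightarrow> 0" by simp
    have "(\<lambda>n. (dd n $ col)^2) \<longlonglongrightarrow> 0"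
    proof (rule tendsto_sandwich[OF _ _ tendsto_const t1])
      show "\<forall>\<^sub>F n in sequentially. 0 \<le> (dd n $ col)^2" by simp
      show "\<forall>\<^sub>F n in sequentially. (dd n $ col)^2 \<le> CC (x n) (Gam n) (dd n) / \<kappa>"
        using k xin by (simp add: pos_le_divide_eq mult.commute)
    qed
    then have "(\<lambda>n. sqrt ((dd n $ col)^2)) \<longlonglongrightarrow> sqrt 0" by (intro tendsto_intros)
    then have "(\<lambda>n. \<bar>dd n $ col\<bar>) \<longlonglongrightarrow> 0" by simp
    then have "(\<lambda>n. dd n $ col) \<longlonglongrightarrow> 0" by (simp only: tendsto_rabs_zero_iff)
    then show "(\<lambda>n. dd n $ col) \<longlonglongrightarrow> 0 $ col" by simp
  qed
  define p where "p m = q (Suc m) - 1" for m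
  have qpos: "q (Suc m) \<ge> 1" for m
    using q_mono[unfolded strict_mono_def, rule_format, of m "Suc m"] by simp
  have qp: "q (Suc m) = Suc (p m)" for m using qpos[of m] unfolding p_def by simp
  have pmono: "strict_mono p"
  proof (rule strict_monoI_Suc)
    fix m
    have "q (Suc m) < q (Suc (Suc m))" using q_mono by (simp add: strict_mono_def)
    then show "p m < p (Suc m)" using qp[of m] qp[of "Suc m"] by simp
  qed
  have xS: "(\<lambda>m. x (Suc (p m))) \<longlonglongrightarrow> xs"
    using LIMSEQ_Suc[OF conv_x] unfolding qp .
  have ddp: "(\<lambda>m. dd (p m)) \<longlonglongrightarrow> 0"
    using LIMSEQ_subseq_LIMSEQ[OF ddt pmono] by (simp add: o_def)
  have xp: "(\<lambda>m. x (p m)) \<longlonglongrightarrow> xs"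
  proof -
    have "(\<lambda>m. x (Suc (p m)) + dd (p m)) \<longlonglongrightarrow> xs + 0" by (intro tendsto_intros xS ddp)
    then show ?thesis by (simp add: dd_def)
  qed
  have part1: "(\<lambda>m. x (q m - 1)) \<longlonglongrightarrow> xs"
    by (rule LIMSEQ_imp_Suc) (use xp in \<open>simp add: p_def\<close>)
  have Zp: "\<forall>j. (\<lambda>m. Z (p m) j) \<longlonglongrightarrow> Zss j"
    using conv_Z LIMSEQ_Suc unfolding p_def by blast
  have Gp: "eventually (\<lambda>m. Gam (p m) = Gss) sequentially"
  proof -
    have "eventually (\<lambda>m. \<forall>j. Gam (q m - 1) j = Gss j) sequentially"
      using conv_Gam by (intro eventually_all_finite) auto
    then have "eventually (\<lambda>m. \<forall>j. Gam (q (Suc m) - 1) j = Gss j) sequentially"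
      using eventually_sequentially_Suc[of "\<lambda>m. \<forall>j. Gam (q m - 1) j = Gss j"] by simp
    then show ?thesis unfolding p_def by (simp add: fun_eq_iff)
  qed
  have xsX: "xs \<in> X"
    using closed_sequentially[OF _ _ conv_x, of X] xin unfolding X_def Xset_cbox by (simp add: closed_cbox)
  define Fp where "Fp y Z' xb = (\<Sum>i\<in>UNIV. qsurr I0 sig2 (Y i) (s1 i) (s2 i) (c i) (lproj A y i) (lproj A xb i))
     + beta * (\<Sum>j\<in>UNIV. tau j * (norm (Om (Gss j) *v (P j *v y) - Z' j))^2)" for y Z' xb
  define K :: "('j \<Rightarrow> real^'v) \<Rightarrow> real" where "K Z' = beta * (\<Sum>j\<in>UNIV. tau j * (gc^2 * real (l0 (Z' j))))" for Z'
  have Fsplit: "F y Z' Gss xb = Fp y Z' xb + K Z'" for y Z' xb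
    unfolding F_def Fp_def K_def by (rule Fmaj_split)
  have xsmin: "F xs Zss Gss xs \<le> F w Zss Gss xs" if w: "w \<in> X" for w
  proof -
    have ev: "eventually (\<lambda>m. Fp (x (Suc (p m))) (Z (p m)) (x (p m)) \<le> Fp w (Z (p m)) (x (p m))) sequentially"
      using Gp
    proof eventually_elim
      case (elim m)
      have "F (x (Suc (p m))) (Z (p m)) (Gam (p m)) (x (p m)) \<le> F w (Z (p m)) (Gam (p m)) (x (p m))"
        using img_update w unfolding F_def X_def by blast
      then show ?case using elim Fsplit by simp
    qed
    have t1: "(\<lambda>m. Fp (x (Suc (p m))) (Z (p m)) (x (p m))) \<longlonglongrightarrow> Fp xs Zss xs"
      unfolding Fp_def
      by (rule Fpart_tendsto[OF I0_pos sig2_nonneg c_cont A_nonneg xS xp Zp, of xmax])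
        (use xin xsX in \<open>auto simp: X_def\<close>)
    have t2: "(\<lambda>m. Fp w (Z (p m)) (x (p m))) \<longlonglongrightarrow> Fp w Zss xs"
      unfolding Fp_def
      by (rule Fpart_tendsto[OF I0_pos sig2_nonneg c_cont A_nonneg tendsto_const xp Zp, of xmax])
        (use xin xsX in \<open>auto simp: X_def\<close>)
    have "Fp xs Zss xs \<le> Fp w Zss xs"
      by (rule tendsto_le[OF _ t2 t1 ev]) simp
    then show ?thesis using Fsplit by simp
  qed
  have uniq: "y = xs" if y: "y \<in> X" "\<forall>w\<in>X. F y Zss Gss xs \<le> F w Zss Gss xs" for y
  proof -
    have "F y Zss Gss xs + CC xs Gss (xs - y) \<le> F xs Zss Gss xs"
      by (rule minstep[OF xsX y(2) y(1)])
    moreover have "F xs Zss Gss xs \<le> F y Zss Gss xs" using xsmin y(1) by blast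
    ultimately have c0: "CC xs Gss (xs - y) \<le> 0" by linarith
    have "(xs - y) $ col = 0" for col
    proof -
      obtain \<kappa> where k: "\<kappa> > 0" "\<forall>xb\<in>X. \<forall>G' d. \<kappa> * (d $ col)^2 \<le> CC xb G' d" using coordlow by blast
      have "\<kappa> * ((xs - y) $ col)^2 \<le> CC xs Gss (xs - y)" using k xsX by blast
      then have "\<kappa> * ((xs - y) $ col)^2 \<le> 0" using c0 by linarith
      then have "((xs - y) $ col)^2 \<le> 0" using k by (simp add: mult_le_0_iff)
      then show ?thesis by simp
    qed
    then show ?thesis by (simp add: vec_eq_iff)
  qed
  have part2: "{y \<in> X. \<forall>w\<in>X. F y Zss Gss xs \<le> F w Zss Gss xs} = {xs}"
  proof (rule set_eqI)
    fix y
    show "y \<in> {y \<in> X. \<forall>w\<in>X. F y Zss Gss xs \<le> F w Zss Gss xs} \<longleftrightarrow> y \<in> {xs}"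
    proof
      assume "y \<in> {y \<in> X. \<forall>w\<in>X. F y Zss Gss xs \<le> F w Zss Gss xs}"
      then have "y = xs" using uniq by blast
      then show "y \<in> {xs}" by simp
    next
      assume "y \<in> {xs}"
      then show "y \<in> {y \<in> X. \<forall>w\<in>X. F y Zss Gss xs \<le> F w Zss Gss xs}" using xsX xsmin by simp
    qed
  qed
  show ?thesis using part1 part2 unfolding F_def X_def by simp
qed

end
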